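(* Let $A, B \in M_n(\mathbb{C})$. Assume that $\mathrm{Sp}(kA+B) \subset \mathbb{Z}$ for every $k \in \mathbb{N}$. Then the pair $(A,B)$ has property L.
   Context: $\mathbb{N}$ is the set of non-negative integers; $\mathrm{Sp}(M)$ is the set of eigenvalues of $M$. A pair $(A,B) \in M_n(\mathbb{C})^2$ has property L if there exist $n$ linear forms $f_1,\dots,f_n$ on $\mathbb{C}^2$ such that for all $(x,y) \in \mathbb{C}^2$, the characteristic polynomial of $xA+yB$ equals $\prod_{k=1}^n (X - f_k(x,y))$. Equivalently, there exist affine maps $g_1,\dots,g_n:\mathbb{C}\to\mathbb{C}$ with $\chi_{A+zB}(X)=\prod_{k=1}^n (X-g_k(z))$ for all $z \in \mathbb{C}$. *)

theory Defs
  imports "Jordan_Normal_Form.Spectral_Radius"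
begin

definition property_L :: "nat \<Rightarrow> complex mat \<Rightarrow> complex mat \<Rightarrow> bool" where
  "property_L n A B \<longleftrightarrow>
     (\<exists>a b :: nat \<Rightarrow> complex. \<forall>x y :: complex.
        char_poly (x \<cdot>\<^sub>m A + y \<cdot>\<^sub>m B) = (\<Prod>k<n. [: - (a k * x + b k * y), 1 :]))"

end

theory Submission
  imports Defs "HOL-Computational_Algebra.Primes"
begin


definition fdiff :: "(nat \<Rightarrow> int) \<Rightarrow> nat \<Rightarrow> int" where
  "fdiff f k = f (Suc k) - f k"

lemma binom_transform:
  "f k = (\<Sum>i\<le>k. int (k choose i) * (fdiff ^^ i) f 0)"
proof (induction k arbitrary: f)
  case 0
  then show ?case by simp
next
  case (Suc k)
  have e: "(fdiff ^^ i) (fdiff f) = (fdiff ^^ Suc i) f" for i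
    by (simp add: funpow_Suc_right del: funpow.simps)
  have "f (Suc k) = f k + fdiff f k" by (simp add: fdiff_def)
  also have "\<dots> = (\<Sum>i\<le>k. int (k choose i) * (fdiff ^^ i) f 0)
       + (\<Sum>i\<le>k. int (k choose i) * (fdiff ^^ Suc i) f 0)"
    using Suc[of f] Suc[of "fdiff f"] e by simp
  also have "\<dots> = (\<Sum>i\<le>Suc k. int (Suc k choose i) * (fdiff ^^ i) f 0)"
  proof -
    have "(\<Sum>i\<le>Suc k. int (Suc k choose i) * (fdiff ^^ i) f 0)
       = f 0 + (\<Sum>i\<le>k. int (Suc k choose Suc i) * (fdiff ^^ Suc i) f 0)"
      by (subst sum.atMost_Suc_shift) simp
    also have "\<dots> = f 0 + (\<Sum>i\<le>k. int (k choose i) * (fdiff ^^ Suc i) f 0)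
        + (\<Sum>i\<le>k. int (k choose Suc i) * (fdiff ^^ Suc i) f 0)"
      by (simp add: sum.distrib algebra_simps)
    also have "(\<Sum>i\<le>k. int (k choose Suc i) * (fdiff ^^ Suc i) f 0)
        = (\<Sum>i\<le>Suc k. int (k choose i) * (fdiff ^^ i) f 0) - f 0"
    proof -
      have "(\<Sum>i\<le>Suc k. int (k choose i) * (fdiff ^^ i) f 0)
         = f 0 + (\<Sum>i\<le>k. int (k choose Suc i) * (fdiff ^^ Suc i) f 0)"
        by (subst sum.atMost_Suc_shift) simp
      then show ?thesis by simp
    qed
    also have "\<dots> = (\<Sum>i\<le>k. int (k choose i) * (fdiff ^^ i) f 0) - f 0"
      by simp
    finally show ?thesis by simp
  qed
  finally show ?case .
qed

definition pdiff :: "complex poly \<Rightarrow> complex poly" where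
  "pdiff g = pcompose g [:1,1:] - g"

lemma poly_pdiff: "poly (pdiff g) x = poly g (x+1) - poly g x"
  by (simp add: pdiff_def poly_pcompose algebra_simps)

lemma degree_pdiff: "degree (pdiff g) \<le> degree g - 1"
proof (cases "degree g = 0")
  case True
  then obtain c where "g = [:c:]" by (metis degree_eq_zeroE)
  then show ?thesis by (simp add: pdiff_def)
next
  case False
  let ?d = "degree g"
  have d1: "degree (pcompose g [:1,1:]) = ?d" by (simp add: degree_pcompose)
  have l: "coeff (pcompose g [:1,1:]) ?d = lead_coeff g"
    using lead_coeff_comp[of "[:1,1:]" g] d1 by simp
  have le: "degree (pdiff g) \<le> ?d" unfolding pdiff_def using d1
    by (metis degree_diff_le le_refl)
  have c0: "coeff (pdiff g) ?d = 0" using l by (simp add: pdiff_def)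
  show ?thesis
  proof (cases "pdiff g = 0")
    case True then show ?thesis by simp
  next
    case nz: False
    have "degree (pdiff g) \<noteq> ?d" using c0 nz leading_coeff_0_iff by metis
    with le show ?thesis by simp
  qed
qed

lemma pdiff_const: "degree g = 0 \<Longrightarrow> pdiff g = 0"
  by (metis degree_eq_zeroE pdiff_def pcompose_const diff_self)

lemma pdiff_funpow_degree: "degree ((pdiff ^^ i) g) \<le> degree g - i"
  by (induction i) (auto intro: order_trans[OF degree_pdiff])

lemma pdiff_funpow_zero: "i > degree g \<Longrightarrow> (pdiff ^^ i) g = 0"
proof -
  assume "i > degree g"
  then obtain j where i: "i = Suc j" and j: "j \<ge> degree g" by (cases i) auto
  have "degree ((pdiff ^^ j) g) = 0" using pdiff_funpow_degree[of j g] j by simp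
  then show ?thesis using i pdiff_const by simp
qed

lemma fdiff_pdiff:
  assumes "\<And>k. poly g (of_nat k) = of_int (f k)"
  shows "poly ((pdiff ^^ i) g) (of_nat k) = of_int ((fdiff ^^ i) f k)"
proof (induction i arbitrary: k)
  case 0 then show ?case using assms by simp
next
  case (Suc i)
  show ?case using Suc[of k] Suc[of "Suc k"]
    by (simp add: poly_pdiff fdiff_def add.commute)
qed

lemma cong_prime:
  fixes g :: "complex poly"
  assumes "\<And>k. poly g (of_nat k) = of_int (f k)" and "prime p" and "degree g < p"
  shows "int p dvd f p - f 0"
proof -
  have "f p = (\<Sum>i\<le>p. int (p choose i) * (fdiff ^^ i) f 0)" by (rule binom_transform)
  also have "\<dots> = f 0 + (\<Sum>i\<in>{1..p}. int (p choose i) * (fdiff ^^ i) f 0)"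
    by (simp add: atMost_atLeast0 sum.atLeast_Suc_atMost)
  finally have e: "f p - f 0 = (\<Sum>i\<in>{1..p}. int (p choose i) * (fdiff ^^ i) f 0)" by simp
  have "int p dvd int (p choose i) * (fdiff ^^ i) f 0" if i: "i \<in> {1..p}" for i
  proof (cases "i < p")
    case True
    have "p dvd (p choose i)" using dvd_choose_prime[of i p] True i assms(2) by auto
    then show ?thesis by (simp add: int_dvd_int_iff)
  next
    case False
    then have "i = p" using i by simp
    then have "(pdiff ^^ i) g = 0" using assms(3) pdiff_funpow_zero by simp
    then have "(fdiff ^^ i) f 0 = 0" using fdiff_pdiff[OF assms(1), of i 0] by simp
    then show ?thesis by simp
  qed
  then show ?thesis unfolding e by (intro dvd_sum) auto
qed




abbreviation ev :: "complex \<Rightarrow> complex poly poly \<Rightarrow> complex poly" where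
  "ev x Q \<equiv> map_poly (\<lambda>q. poly q x) Q"

lemma ev_mult: "ev x (P * R) = ev x P * ev x R"
proof -
  interpret h: map_poly_comm_ring_hom "\<lambda>q::complex poly. poly q x" ..
  show ?thesis by (rule h.hom_mult)
qed

lemma ev_one: "ev x 1 = 1" by simp

lemma poly_swap: "poly (poly Q r) x = poly (ev x Q) (poly r x)"
  by (induction Q rule: pCons_induct) (auto simp: map_poly_pCons)

lemma ev_eq:
  assumes "infinite S" and "\<forall>x\<in>S. ev x Q1 = ev x Q2"
  shows "Q1 = Q2"
proof (rule poly_eqI)
  fix j
  show "coeff Q1 j = coeff Q2 j"
  proof (rule ccontr)
    assume ne: "coeff Q1 j \<noteq> coeff Q2 j"
    have "S \<subseteq> {x. poly (coeff Q1 j - coeff Q2 j) x = 0}"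
    proof
      fix x assume "x \<in> S"
      then have "coeff (ev x Q1) j = coeff (ev x Q2) j" using assms(2) by simp
      then show "x \<in> {x. poly (coeff Q1 j - coeff Q2 j) x = 0}" by (simp add: coeff_map_poly)
    qed
    moreover have "finite {x. poly (coeff Q1 j - coeff Q2 j) x = 0}"
      using ne by (intro poly_roots_finite) simp
    ultimately show False using assms(1) finite_subset by blast
  qed
qed

lemma infinite_nats: "infinite (of_nat ` S :: complex set)" if "infinite S" for S :: "nat set"
  using that by (simp add: finite_image_iff inj_on_def)

lemma degree_poly_const:
  fixes Q :: "complex poly poly"
  shows "degree (poly Q [:c:]) \<le> (\<Sum>j\<le>degree Q. degree (coeff Q j))"
proof -
  have "poly Q [:c:] = (\<Sum>j\<le>degree Q. coeff Q j * [:c:] ^ j)"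
    by (simp add: poly_altdef mult.commute)
  also have "degree \<dots> \<le> (\<Sum>j\<le>degree Q. degree (coeff Q j))"
  proof (rule degree_sum_le)
    fix j assume "j \<in> {..degree Q}"
    have "degree (coeff Q j * [:c:] ^ j) \<le> degree (coeff Q j)"
    proof -
      have "[:c:] ^ j = [:c ^ j:]" by (induction j) auto
      then have "coeff Q j * [:c:] ^ j = Polynomial.smult (c ^ j) (coeff Q j)" by simp
      then show ?thesis by (simp add: degree_smult_le)
    qed
    also have "\<dots> \<le> (\<Sum>j\<le>degree Q. degree (coeff Q j))"
      using \<open>j \<in> _\<close> by (intro member_le_sum) auto
    finally show "degree (coeff Q j * [:c:] ^ j) \<le> (\<Sum>j\<le>degree Q. degree (coeff Q j))" .
  qed auto
  finally show ?thesis .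
qed

lemma poly_prod_lin: "poly (\<Prod>r\<leftarrow>rs. [:- of_int r, 1:]) (of_int a :: complex) = of_int (\<Prod>r\<leftarrow>rs. (a - r))"
  by (induction rs) (auto simp: algebra_simps)

lemma prod_remove1_gen:
  fixes f :: "'b \<Rightarrow> 'a::comm_monoid_mult"
  shows "a \<in> set rs \<Longrightarrow> (\<Prod>r\<leftarrow>rs. f r) = f a * (\<Prod>r\<leftarrow>remove1 a rs. f r)"
  by (induction rs) (auto simp: mult.left_commute)

lemma prod_lin_remove1:
  assumes "a \<in> set rs"
  shows "(\<Prod>r\<leftarrow>rs. [:- of_int r, 1:]) = [:- of_int a, 1:] * (\<Prod>r\<leftarrow>remove1 a rs. [:- of_int r, 1:] :: complex poly)"
  by (rule prod_remove1_gen[OF assms])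

lemma lin_cancel:
  assumes "(\<Prod>r\<leftarrow>rs. [:- of_int r, 1:]) = [:- of_int a, 1:] * (G :: complex poly)"
  shows "a \<in> set rs \<and> G = (\<Prod>r\<leftarrow>remove1 a rs. [:- of_int r, 1:])"
proof -
  have "poly (\<Prod>r\<leftarrow>rs. [:- of_int r, 1:]) (of_int a :: complex) = 0"
    unfolding assms by simp
  then have "(\<Prod>r\<leftarrow>rs. (a - r)) = 0" unfolding poly_prod_lin by simp
  then have a: "a \<in> set rs" by (induction rs) auto
  have "[:- of_int a, 1:] * G = [:- of_int a, 1:] * (\<Prod>r\<leftarrow>remove1 a rs. [:- of_int r, 1:] :: complex poly)"
    using assms prod_lin_remove1[OF a] by simp
  moreover have nz: "[:- of_int a, 1:] \<noteq> (0::complex poly)" by simp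
  ultimately have "G = (\<Prod>r\<leftarrow>remove1 a rs. [:- of_int r, 1:])"
    using mult_left_cancel[OF nz] by blast
  with a show ?thesis by simp
qed




lemma prime_dvd_prod_list_map:
  fixes p :: int
  assumes "prime p" "p dvd (\<Prod>x\<leftarrow>xs. h x)"
  shows "\<exists>x\<in>set xs. p dvd h x"
  using assms(2)
proof (induction xs)
  case Nil then show ?case using assms(1) not_prime_unit by auto
next
  case (Cons a xs)
  then show ?case using prime_dvd_mult_iff[OF assms(1)] by auto
qed

lemma primes_infinite_above: "infinite {p::nat. prime p \<and> D < p}"
proof
  assume "finite {p::nat. prime p \<and> D < p}"
  then obtain N where N: "\<forall>p\<in>{p::nat. prime p \<and> D < p}. p < N"
    using finite_nat_bounded by blast
  obtain p where "prime p" "p > N + D" using bigger_prime by blast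
  with N show False by auto
qed

lemma core:
  fixes Q :: "complex poly poly" and C :: nat
  assumes "\<forall>k::nat. \<exists>rs::int list. length rs = m \<and> ev (of_nat k) Q = (\<Prod>r\<leftarrow>rs. [:- of_int r, 1:])
             \<and> (\<forall>r\<in>set rs. \<bar>r\<bar> \<le> int C * (int k + 1))"
  shows "\<exists>ls::(int \<times> int) list. length ls = m \<and> Q = (\<Prod>(c,\<mu>)\<leftarrow>ls. [: - [:of_int \<mu>, of_int c:], 1:])"
  using assms
proof (induction m arbitrary: Q)
  case 0
  have "\<forall>x\<in>range (of_nat :: nat \<Rightarrow> complex). ev x Q = ev x 1"
    using 0 by auto
  then have "Q = 1" using ev_eq infinite_nats[of UNIV] by blast
  then show ?case by (intro exI[of _ "[]"]) simp
next
  case (Suc m)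
  have "\<exists>RS. \<forall>k. length (RS k) = Suc m \<and> ev (of_nat k) Q = (\<Prod>r\<leftarrow>RS k. [:- of_int r, 1:])
             \<and> (\<forall>r\<in>set (RS k). \<bar>r\<bar> \<le> int C * (int k + 1))"
    using Suc.prems by (rule choice)
  then obtain RS where RS: "\<And>k. length (RS k) = Suc m" "\<And>k. ev (of_nat k) Q = (\<Prod>r\<leftarrow>RS k. [:- of_int r, 1:])"
             "\<And>k r. r \<in> set (RS k) \<Longrightarrow> \<bar>r\<bar> \<le> int C * (int k + 1)" by blast
  define D where "D = (\<Sum>j\<le>degree Q. degree (coeff Q j))"
  define T where "T = {-(3*int C)..3*int C} \<times> set (RS 0)"
  define Z where "Z = (\<lambda>(c::int,\<mu>::int). {p::nat. poly (poly Q [:of_int \<mu>, of_int c:]) (of_nat p) = 0})"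
  have cover: "{p. prime p \<and> D < p} \<subseteq> (\<Union>x\<in>T. Z x)"
  proof
    fix p assume "p \<in> {p. prime p \<and> D < p}"
    then have pp: "prime p" and pD: "D < p" by auto
    define lam where "lam = hd (RS p)"
    have lam_in: "lam \<in> set (RS p)" using RS(1)[of p] unfolding lam_def by (cases "RS p") auto
    define g where "g = poly Q [:of_int lam:]"
    define f where "f = (\<lambda>k. \<Prod>r\<leftarrow>RS k. (lam - r))"
    have gf: "poly g (of_nat k) = of_int (f k)" for k
    proof -
      have "poly g (of_nat k) = poly (ev (of_nat k) Q) (of_int lam)" unfolding g_def poly_swap by simp
      also have "\<dots> = of_int (f k)" unfolding RS(2) f_def by (rule poly_prod_lin)
      finally show ?thesis .
    qed
    have "degree g < p" using degree_poly_const[of Q "of_int lam"] pD unfolding g_def D_def by simp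
    from cong_prime[OF gf pp this] have dv: "int p dvd f p - f 0" .
    have fp: "f p = 0" unfolding f_def using lam_in by (induction "RS p") (auto simp: prod_list_zero_iff)
    have "int p dvd (\<Prod>r\<leftarrow>RS 0. (lam - r))" using dv fp unfolding f_def by simp
    then obtain \<mu> where mu: "\<mu> \<in> set (RS 0)" and "int p dvd lam - \<mu>"
      using prime_dvd_prod_list_map[of "int p"] pp by auto
    then obtain c where c: "lam - \<mu> = int p * c" by (auto elim: dvdE)
    have b1: "\<bar>lam\<bar> \<le> int C * (int p + 1)" using RS(3)[OF lam_in] .
    have b2: "\<bar>\<mu>\<bar> \<le> int C" using RS(3)[OF mu] by simp
    have p1: "int p \<ge> 1" using pp prime_ge_1_nat by auto
    have cb: "\<bar>c\<bar> \<le> 3 * int C"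
    proof -
      have "\<bar>int p * c\<bar> \<le> int C * (int p + 1) + int C" using c b1 b2 by arith
      moreover have "int C \<le> int C * int p" using p1 by (simp add: mult_le_cancel_left1)
      ultimately have "int p * \<bar>c\<bar> \<le> int p * (3 * int C)" by (simp add: abs_mult algebra_simps)
      then show ?thesis using p1 by (simp add: mult_le_cancel_left_pos)
    qed
    have root: "poly (poly Q [:of_int \<mu>, of_int c:]) (of_nat p) = 0"
    proof -
      have "poly (poly Q [:of_int \<mu>, of_int c:]) (of_nat p) = poly (ev (of_nat p) Q) (of_int lam)"
        unfolding poly_swap using c by (simp add: algebra_simps)
      also have "\<dots> = of_int (f p)" unfolding RS(2) f_def by (rule poly_prod_lin)
      finally show ?thesis using fp by simp
    qed
    show "p \<in> (\<Union>x\<in>T. Z x)" using cb mu root unfolding T_def Z_def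
      by (intro UN_I[of "(c,\<mu>)"]) (auto simp: abs_le_iff)
  qed
  have "\<exists>x\<in>T. infinite (Z x)"
  proof (rule ccontr)
    assume "\<not> ?thesis"
    moreover have "finite T" unfolding T_def by simp
    ultimately have "finite (\<Union>x\<in>T. Z x)" by auto
    then have "finite {p. prime p \<and> D < p}" using cover finite_subset by blast
    then show False using primes_infinite_above by blast
  qed
  then obtain c \<mu> where cm: "(c,\<mu>) \<in> T" and inf: "infinite (Z (c,\<mu>))" by auto
  have "poly Q [:of_int \<mu>, of_int c:] = 0"
  proof (rule ccontr)
    assume ne: "poly Q [:of_int \<mu>, of_int c:] \<noteq> 0"
    have "of_nat ` Z (c,\<mu>) \<subseteq> {x. poly (poly Q [:of_int \<mu>, of_int c:]) x = 0}" unfolding Z_def by auto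
    with poly_roots_finite[OF ne] infinite_nats[OF inf] show False using finite_subset by blast
  qed
  then have "[:- [:of_int \<mu>, of_int c:], 1:] dvd Q" by (simp add: poly_eq_0_iff_dvd)
  then obtain Q' where Q': "Q = [:- [:of_int \<mu>, of_int c:], 1:] * Q'" by (auto elim: dvdE)
  have "\<forall>k::nat. \<exists>rs::int list. length rs = m \<and> ev (of_nat k) Q' = (\<Prod>r\<leftarrow>rs. [:- of_int r, 1:])
             \<and> (\<forall>r\<in>set rs. \<bar>r\<bar> \<le> int C * (int k + 1))"
  proof
    fix k
    have "ev (of_nat k) Q = [:- of_int (\<mu> + c * int k), 1:] * ev (of_nat k) Q'"
      unfolding Q' ev_mult by (simp add: map_poly_pCons mult.commute)
    then have "(\<Prod>r\<leftarrow>RS k. [:- of_int r, 1:]) = [:- of_int (\<mu> + c * int k), 1:] * ev (of_nat k) Q'"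
      using RS(2) by simp
    from lin_cancel[OF this] have mem: "\<mu> + c * int k \<in> set (RS k)"
      and e: "ev (of_nat k) Q' = (\<Prod>r\<leftarrow>remove1 (\<mu> + c * int k) (RS k). [:- of_int r, 1:])" by auto
    show "\<exists>rs::int list. length rs = m \<and> ev (of_nat k) Q' = (\<Prod>r\<leftarrow>rs. [:- of_int r, 1:])
             \<and> (\<forall>r\<in>set rs. \<bar>r\<bar> \<le> int C * (int k + 1))"
      using e mem RS(1)[of k] RS(3)[of _ k] set_remove1_subset[of "\<mu> + c * int k" "RS k"]
      by (intro exI[of _ "remove1 (\<mu> + c * int k) (RS k)"]) (auto simp: length_remove1)
  qed
  from Suc.IH[OF this] obtain ls where "length ls = m" and "Q' = (\<Prod>(c,\<mu>)\<leftarrow>ls. [: - [:of_int \<mu>, of_int c:], 1:])"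
    by blast
  then show ?case by (intro exI[of _ "(c,\<mu>) # ls"]) (simp add: Q')
qed




definition PM :: "nat \<Rightarrow> complex mat \<Rightarrow> complex mat \<Rightarrow> complex poly mat" where
  "PM n A B = mat n n (\<lambda>(i,j). [:B $$ (i,j), A $$ (i,j):])"

lemma PM_eval:
  assumes "A \<in> carrier_mat n n" "B \<in> carrier_mat n n"
  shows "map_mat (\<lambda>q. poly q x) (PM n A B) = x \<cdot>\<^sub>m A + B"
  using assms by (intro eq_matI) (auto simp: PM_def)

lemma char_PM:
  assumes "A \<in> carrier_mat n n" "B \<in> carrier_mat n n"
  shows "ev x (char_poly (PM n A B)) = char_poly (x \<cdot>\<^sub>m A + B)"
proof -
  have "PM n A B \<in> carrier_mat n n" by (simp add: PM_def)
  from poly_hom.char_poly_hom[OF this, of x] show ?thesis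
    using PM_eval[OF assms, of x] by simp
qed

lemma ev_prod: "ev x (\<Prod>q\<leftarrow>qs. f q) = (\<Prod>q\<leftarrow>qs. ev x (f q))"
  by (induction qs) (auto simp: ev_mult)

lemma eig_bound:
  fixes M :: "complex mat"
  assumes M: "M \<in> carrier_mat n n" and ev: "eigenvalue M l"
  shows "cmod l \<le> (\<Sum>i<n. \<Sum>j<n. cmod (M $$ (i,j)))"
proof -
  from ev obtain v where v: "v \<in> carrier_vec n" "v \<noteq> 0\<^sub>v n" "M *\<^sub>v v = l \<cdot>\<^sub>v v"
    using M unfolding eigenvalue_def eigenvector_def by auto
  have nz: "\<exists>j<n. v $ j \<noteq> 0"
  proof (rule ccontr)
    assume "\<not> ?thesis"
    then have "v = 0\<^sub>v n" using v(1) by (intro eq_vecI) auto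
    with v(2) show False by simp
  qed
  then have n0: "{..<n} \<noteq> {}" by auto
  define m where "m = Max ((\<lambda>j. cmod (v $ j)) ` {..<n})"
  have "m \<in> (\<lambda>j. cmod (v $ j)) ` {..<n}" unfolding m_def
    by (rule Max_in) (use n0 in auto)
  then obtain i where i: "i < n" "cmod (v $ i) = m" by auto
  have mx: "cmod (v $ j) \<le> cmod (v $ i)" if "j < n" for j
    unfolding i(2) m_def using that by (intro Max_ge) auto
  have vi: "cmod (v $ i) > 0"
  proof -
    from nz obtain j where "j < n" "v $ j \<noteq> 0" by auto
    with mx[of j] show ?thesis by (meson norm_ge_zero norm_le_zero_iff not_le order_trans)
  qed
  have "l * v $ i = (M *\<^sub>v v) $ i" using v(1) i by (simp add: v(3))
  also have "\<dots> = (\<Sum>j<n. M $$ (i,j) * v $ j)"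
    using M v(1) i by (simp add: scalar_prod_def lessThan_atLeast0)
  finally have e: "l * v $ i = (\<Sum>j<n. M $$ (i,j) * v $ j)" .
  have "cmod l * cmod (v $ i) = cmod (\<Sum>j<n. M $$ (i,j) * v $ j)"
    by (simp only: e[symmetric] norm_mult)
  also have "\<dots> \<le> (\<Sum>j<n. cmod (M $$ (i,j) * v $ j))" by (rule norm_sum)
  also have "\<dots> = (\<Sum>j<n. cmod (M $$ (i,j)) * cmod (v $ j))" by (simp add: norm_mult)
  also have "\<dots> \<le> (\<Sum>j<n. cmod (M $$ (i,j)) * cmod (v $ i))"
    by (intro sum_mono mult_left_mono mx) auto
  also have "\<dots> = (\<Sum>j<n. cmod (M $$ (i,j))) * cmod (v $ i)"
    by (simp add: sum_distrib_right)
  finally have "cmod l \<le> (\<Sum>j<n. cmod (M $$ (i,j)))" using vi by simp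
  also have "\<dots> \<le> (\<Sum>i<n. \<Sum>j<n. cmod (M $$ (i,j)))"
    using i by (intro member_le_sum[of i "{..<n}" "\<lambda>i. \<Sum>j<n. cmod (M $$ (i,j))"]) (auto intro: sum_nonneg)
  finally show ?thesis .
qed




lemma char_poly_smult':
  fixes M :: "complex mat"
  assumes M: "M \<in> carrier_mat n n" and d: "d \<noteq> 0"
  shows "char_poly (d \<cdot>\<^sub>m M) = Polynomial.smult (d^n) (pcompose (char_poly M) [:0, inverse d:])"
proof -
  let ?h = "\<lambda>q::complex poly. pcompose q [:0, inverse d:]"
  have e: "char_poly_matrix (d \<cdot>\<^sub>m M) = [:d:] \<cdot>\<^sub>m map_mat ?h (char_poly_matrix M)"
    using M d by (intro eq_matI) (auto simp: char_poly_matrix_def pcompose_pCons)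
  have cm: "char_poly_matrix M \<in> carrier_mat n n" using M by simp
  have "char_poly (d \<cdot>\<^sub>m M) = [:d:] ^ n * det (map_mat ?h (char_poly_matrix M))"
    unfolding char_poly_def e using cm by simp
  also have "det (map_mat ?h (char_poly_matrix M)) = ?h (det (char_poly_matrix M))"
  proof -
    have hh: "comm_ring_hom ?h"
      by unfold_locales (auto simp: pcompose_add pcompose_mult pcompose_1)
    show ?thesis by (rule comm_ring_hom.hom_det[OF hh])
  qed
  also have "[:d:] ^ n = [:d ^ n:]" by (induction n) auto
  finally show ?thesis by (simp add: char_poly_def)
qed

lemma smult_pcompose_mult:
  "Polynomial.smult (d*e) (pcompose (L*P) q) = Polynomial.smult d (pcompose L q) * Polynomial.smult e (pcompose P q)"
  by (simp add: pcompose_mult mult_smult_left mult_smult_right mult.commute)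

lemma smult_pcompose_prod:
  fixes d :: complex
  assumes "d \<noteq> 0"
  shows "Polynomial.smult (d ^ length rs) (pcompose (\<Prod>r\<leftarrow>rs. [:-r,1:]) [:0, inverse d:]) = (\<Prod>r\<leftarrow>rs. [:-(d*r),1:])"
proof (induction rs)
  case Nil then show ?case by simp
next
  case (Cons a rs)
  have "Polynomial.smult (d ^ length (a#rs)) (pcompose (\<Prod>r\<leftarrow>a#rs. [:-r,1:]) [:0, inverse d:])
     = Polynomial.smult d (pcompose [:-a,1:] [:0, inverse d:]) *
       Polynomial.smult (d ^ length rs) (pcompose (\<Prod>r\<leftarrow>rs. [:-r,1:]) [:0, inverse d:])"
    by (simp only: smult_pcompose_mult[symmetric] list.map prod_list.Cons length_Cons power_Suc)
  also have "Polynomial.smult d (pcompose [:-a,1:] [:0, inverse d:]) = [:-(d*a),1:]"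
    using assms by (simp add: pcompose_pCons)
  finally show ?case using Cons by simp
qed

lemma root_of_prod: "a \<in> set as \<Longrightarrow> poly (\<Prod>x\<leftarrow>as. [:-x,1:]) a = (0::complex)"
  by (induction as) auto

lemma ev_lin:
  "ev s (\<Prod>(c,\<mu>)\<leftarrow>ls. [:-[:of_int \<mu> * y, of_int c * x:],1:])
   = (\<Prod>r\<leftarrow>map (\<lambda>(c,\<mu>). of_int c * x * s + of_int \<mu> * y) ls. [:-r,1:])"
  by (induction ls) (auto simp: ev_mult map_poly_pCons algebra_simps)




theorem mainTheorem5:
  fixes n :: nat and A B :: "complex mat"
  assumes "A \<in> carrier_mat n n" and "B \<in> carrier_mat n n"
    and "\<forall>k :: nat. spectrum (of_nat k \<cdot>\<^sub>m A + B) \<subseteq> \<int>"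
  shows "property_L n A B"
proof -
  define SA where "SA = (\<Sum>i<n. \<Sum>j<n. cmod (A $$ (i,j)))"
  define SB where "SB = (\<Sum>i<n. \<Sum>j<n. cmod (B $$ (i,j)))"
  define C where "C = nat \<lceil>SA + SB\<rceil>"
  have SA0: "SA \<ge> 0" and SB0: "SB \<ge> 0" unfolding SA_def SB_def by (auto intro!: sum_nonneg)
  have CC: "SA + SB \<le> real C" unfolding C_def by linarith
  have roots: "\<forall>k::nat. \<exists>rs::int list. length rs = n \<and> ev (of_nat k) (char_poly (PM n A B)) = (\<Prod>r\<leftarrow>rs. [:- of_int r, 1:])
             \<and> (\<forall>r\<in>set rs. \<bar>r\<bar> \<le> int C * (int k + 1))"
  proof
    fix k :: nat
    let ?M = "of_nat k \<cdot>\<^sub>m A + B"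
    have M: "?M \<in> carrier_mat n n" using assms by simp
    obtain as where as: "char_poly ?M = (\<Prod>a\<leftarrow>as. [:-a,1:])" "length as = n"
      using char_poly_factorized[OF M] by blast
    have eig: "eigenvalue ?M a" if "a \<in> set as" for a
      using eigenvalue_root_char_poly[OF M] root_of_prod[OF that] as(1) by simp
    have ints: "a \<in> \<int>" if "a \<in> set as" for a
      using eig[OF that] assms(3) unfolding spectrum_def by auto
    have Mb: "(\<Sum>i<n. \<Sum>j<n. cmod (?M $$ (i,j))) \<le> real k * SA + SB"
    proof -
      have "(\<Sum>i<n. \<Sum>j<n. cmod (?M $$ (i,j))) \<le> (\<Sum>i<n. \<Sum>j<n. real k * cmod (A $$ (i,j)) + cmod (B $$ (i,j)))"
      proof (intro sum_mono)
        fix i j assume "i \<in> {..<n}" "j \<in> {..<n}"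
        then have "?M $$ (i,j) = of_nat k * A $$ (i,j) + B $$ (i,j)" using assms by simp
        then show "cmod (?M $$ (i,j)) \<le> real k * cmod (A $$ (i,j)) + cmod (B $$ (i,j))"
          by (metis norm_triangle_ineq norm_mult norm_of_nat)
      qed
      also have "\<dots> = real k * SA + SB"
        unfolding SA_def SB_def by (simp add: sum.distrib sum_distrib_left)
      finally show ?thesis .
    qed
    define rs where "rs = map (\<lambda>a. \<lfloor>Re a\<rfloor>) as"
    have fl: "of_int \<lfloor>Re a\<rfloor> = a" if "a \<in> set as" for a
      using ints[OF that] by (auto elim: Ints_cases)
    have "map (\<lambda>r. [:- of_int r, 1:]) rs = map (\<lambda>a. [:-a,1:]) as"
      unfolding rs_def using fl by auto
    then have cp: "char_poly ?M = (\<Prod>r\<leftarrow>rs. [:- of_int r, 1:])" using as(1) by simp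
    have bd: "\<bar>r\<bar> \<le> int C * (int k + 1)" if r_in: "r \<in> set rs" for r
    proof -
      obtain a where a: "a \<in> set as" "r = \<lfloor>Re a\<rfloor>" using r_in unfolding rs_def by auto
      have "cmod a \<le> real k * SA + SB" using eig_bound[OF M eig[OF a(1)]] Mb by linarith
      moreover have "cmod a = real_of_int \<bar>r\<bar>"
      proof -
        have "a = of_int r" using fl[OF a(1)] a(2) by simp
        then show ?thesis by (simp only: norm_of_int)
      qed
      moreover have "real k * SA + SB \<le> real C * (real k + 1)"
      proof -
        have "real k * SA + SB \<le> (real k + 1) * (SA + SB)" using SA0 SB0
          by (simp add: algebra_simps)
        also have "\<dots> \<le> (real k + 1) * real C" using CC by (intro mult_left_mono) auto
        finally show ?thesis by (simp add: mult.commute)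
      qed
      ultimately have "real_of_int \<bar>r\<bar> \<le> real_of_int (int C * (int k + 1))" by simp
      then show ?thesis by linarith
    qed
    show "\<exists>rs::int list. length rs = n \<and> ev (of_nat k) (char_poly (PM n A B)) = (\<Prod>r\<leftarrow>rs. [:- of_int r, 1:])
             \<and> (\<forall>r\<in>set rs. \<bar>r\<bar> \<le> int C * (int k + 1))"
      using cp bd as(2) char_PM[OF assms(1,2), of "of_nat k"]
      by (intro exI[of _ rs]) (auto simp: rs_def)
  qed
  from core[OF roots] obtain ls where ls: "length ls = n"
    "char_poly (PM n A B) = (\<Prod>(c,\<mu>)\<leftarrow>ls. [:-[:of_int \<mu>, of_int c:],1:])" by blast
  define F where "F = (\<lambda>x y::complex. map (\<lambda>(c,\<mu>). of_int c * x + of_int \<mu> * y) ls)"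
  have lenF: "length (F x y) = n" for x y unfolding F_def using ls(1) by simp
  have base: "char_poly (x \<cdot>\<^sub>m A + B) = (\<Prod>r\<leftarrow>F x 1. [:-r,1:])" for x
  proof -
    have "char_poly (x \<cdot>\<^sub>m A + B) = ev x (char_poly (PM n A B))"
      using char_PM[OF assms(1,2)] by simp
    also have "\<dots> = (\<Prod>r\<leftarrow>F x 1. [:-r,1:])"
      unfolding ls(2) F_def using ev_lin[where s=x and y=1 and x=1 and ls=ls] by simp
    finally show ?thesis .
  qed
  have gen_ne: "char_poly (x \<cdot>\<^sub>m A + y \<cdot>\<^sub>m B) = (\<Prod>r\<leftarrow>F x y. [:-r,1:])" if y: "y \<noteq> 0" for x y
  proof -
    have "x \<cdot>\<^sub>m A + y \<cdot>\<^sub>m B = y \<cdot>\<^sub>m ((x/y) \<cdot>\<^sub>m A + B)"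
      using assms y by (intro eq_matI) (auto simp: field_simps)
    then have "char_poly (x \<cdot>\<^sub>m A + y \<cdot>\<^sub>m B)
        = Polynomial.smult (y^n) (pcompose (\<Prod>r\<leftarrow>F (x/y) 1. [:-r,1:]) [:0, inverse y:])"
      using char_poly_smult'[of "(x/y) \<cdot>\<^sub>m A + B" n y] assms y base by simp
    also have "\<dots> = (\<Prod>r\<leftarrow>F (x/y) 1. [:-(y*r),1:])"
      using smult_pcompose_prod[OF y, of "F (x/y) 1"] lenF by simp
    also have "\<dots> = (\<Prod>r\<leftarrow>F x y. [:-r,1:])"
    proof -
      have pt: "y * (of_int c * (x/y) + of_int m * 1) = of_int c * x + of_int m * y" for c m :: int
        using y by (simp add: field_simps)
      show ?thesis unfolding F_def map_map
        by (intro arg_cong[where f=prod_list] map_cong refl) (use y in \<open>auto simp: field_simps\<close>)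
    qed
    finally show ?thesis .
  qed
  have gen0: "char_poly (x \<cdot>\<^sub>m A + 0 \<cdot>\<^sub>m B) = (\<Prod>r\<leftarrow>F x 0. [:-r,1:])" for x
  proof -
    define R3 where "R3 = (\<Prod>(c,\<mu>)\<leftarrow>ls. [:-[:of_int c * x, of_int \<mu>:],1:])"
    have xA: "x \<cdot>\<^sub>m A \<in> carrier_mat n n" using assms by simp
    have evR: "ev s R3 = (\<Prod>r\<leftarrow>F x s. [:-r,1:])" for s
      unfolding R3_def F_def by (induction ls) (auto simp: ev_mult map_poly_pCons algebra_simps)
    have evQ: "ev s (char_poly (PM n B (x \<cdot>\<^sub>m A))) = char_poly (x \<cdot>\<^sub>m A + s \<cdot>\<^sub>m B)" for s
    proof -
      have "s \<cdot>\<^sub>m B + x \<cdot>\<^sub>m A = x \<cdot>\<^sub>m A + s \<cdot>\<^sub>m B"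
        using assms by (intro eq_matI) auto
      then show ?thesis using char_PM[OF assms(2) xA, of s] by simp
    qed
    have "\<forall>s\<in>UNIV - {0}. ev s (char_poly (PM n B (x \<cdot>\<^sub>m A))) = ev s R3"
      using evQ evR gen_ne by auto
    moreover have "infinite (UNIV - {0::complex})"
      using infinite_UNIV_char_0 by auto
    ultimately have "char_poly (PM n B (x \<cdot>\<^sub>m A)) = R3" using ev_eq by blast
    then show ?thesis using evQ[of 0] evR[of 0] by simp
  qed
  define a where "a = (\<lambda>k. of_int (fst (ls ! k)) :: complex)"
  define b where "b = (\<lambda>k. of_int (snd (ls ! k)) :: complex)"
  have "char_poly (x \<cdot>\<^sub>m A + y \<cdot>\<^sub>m B) = (\<Prod>k<n. [: - (a k * x + b k * y), 1 :])" for x y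
  proof -
    have "char_poly (x \<cdot>\<^sub>m A + y \<cdot>\<^sub>m B) = (\<Prod>r\<leftarrow>F x y. [:-r,1:])"
      using gen_ne gen0 by (cases "y = 0") auto
    also have "\<dots> = (\<Prod>k<n. [: - (a k * x + b k * y), 1 :])"
      unfolding prod.list_conv_set_nth using lenF ls(1)
      by (intro prod.cong) (auto simp: F_def a_def b_def split_def lessThan_atLeast0)
    finally show ?thesis .
  qed
  then show ?thesis unfolding property_L_def by blast
qed


end
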